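(* For every integer $h \geq 3$, \[ \frac{\sin\bigl(\pi\sqrt{3/h}\bigr)}{\pi\sqrt{3/h}} < \left( \frac{4}{3 - \cos(\pi/h)} - 1 \right)^h . \] Consequently $x_h < \pi\sqrt{3/h}$ for all $h \geq 3$, where $x_h$ is the unique real number in $(0,\pi)$ with $\frac{\sin x_h}{x_h} = \left( \frac{4}{3-\cos(\pi/h)} - 1\right)^h$. *)

theory Defs
  imports Complex_Main
begin

end

theory Submission
  imports Defs "HOL-Analysis.Complex_Transcendental"
begin

lemma polyQ:
  fixes n p :: real
  assumes n: "n \<ge> 3" and p0: "98696/10000 \<le> p" and p1: "p \<le> 98697/10000"
  shows "0 < 384*n^6 - 160*n^5*p + 288*n^4*p - 80*n^3*p - 108*n^2*p^2 + 60*n*p^2 - 9*p^3"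
proof -
  define q0 :: real where "q0 = 98696/10000"
  define q1 :: real where "q1 = 98697/10000"
  have pp: "0 \<le> p" using p0 by simp
  have a1: "n^5*p \<le> n^5*q1" using p1 n unfolding q1_def by (intro mult_left_mono) auto
  have a2: "n^4*q0 \<le> n^4*p" using p0 n unfolding q0_def by (intro mult_left_mono) auto
  have a3: "n^3*p \<le> n^3*q1" using p1 n unfolding q1_def by (intro mult_left_mono) auto
  have sq: "p^2 \<le> q1^2" using p1 pp unfolding q1_def by (intro power_mono) auto
  have sq0: "q0^2 \<le> p^2" using p0 unfolding q0_def by (intro power_mono) auto
  have cu: "p^3 \<le> q1^3" using p1 pp unfolding q1_def by (intro power_mono) auto
  have a4: "n^2*p^2 \<le> n^2*q1^2" using sq by (intro mult_left_mono) auto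
  have a5: "n*q0^2 \<le> n*p^2" using sq0 n by (intro mult_left_mono) auto
  obtain t where t: "t \<ge> 0" "n = 3 + t" using n by (metis add.commute diff_add_cancel diff_ge_0_iff_ge)
  have "0 < 384*n^6 - 160*n^5*q1 + 288*n^4*q0 - 80*n^3*q1 - 108*n^2*q1^2 + 60*n*q0^2 - 9*q1^3"
  proof -
    have e: "384*n^6 - 160*n^5*q1 + 288*n^4*q0 - 80*n^3*q1 - 108*n^2*q1^2 + 60*n*q0^2 - 9*q1^3
       = 384*t^6 + (384*18 - 160*q1)*t^5 + (384*135 - 160*q1*15 + 288*q0)*t^4
         + (384*540 - 160*q1*90 + 288*q0*12 - 80*q1)*t^3
         + (384*1215 - 160*q1*270 + 288*q0*54 - 80*q1*9 - 108*q1^2)*t^2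
         + (384*1458 - 160*q1*405 + 288*q0*108 - 80*q1*27 - 108*q1^2*6 + 60*q0^2)*t
         + (384*729 - 160*q1*243 + 288*q0*81 - 80*q1*27 - 108*q1^2*9 + 60*q0^2*3 - 9*q1^3)"
      unfolding t(2) by (simp add: algebra_simps power2_eq_square power3_eq_cube numeral_eq_Suc)
    show ?thesis unfolding e unfolding q0_def q1_def using t(1)
      by (simp add: power2_eq_square power3_eq_cube;
          intro add_nonneg_pos add_nonneg_nonneg mult_nonneg_nonneg zero_le_power; simp)
  qed
  thus ?thesis using a1 a2 a3 a4 a5 cu by linarith
qed


lemma c3_nonneg: "0 \<le> real k * (real k - 1) * (real k - 2)"
proof (cases "k \<ge> 2")
  case True
  then have "real k \<ge> 2" by simp
  then show ?thesis by (intro mult_nonneg_nonneg) auto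
next
  case False
  then have "k = 0 \<or> k = 1" by auto
  then show ?thesis by auto
qed

lemma bern3:
  fixes v :: real
  assumes "0 \<le> v" "v \<le> 1"
  shows "1 - real k * v + real k * (real k - 1) / 2 * v^2 - real k * (real k - 1) * (real k - 2) / 6 * v^3 \<le> (1 - v)^k"
proof (induction k)
  case 0
  then show ?case by simp
next
  case (Suc k)
  let ?B = "1 - real k * v + real k * (real k - 1) / 2 * v^2 - real k * (real k - 1) * (real k - 2) / 6 * v^3"
  have "(1 - v) * ?B \<le> (1 - v) * (1 - v)^k" using Suc assms by (intro mult_left_mono) auto
  moreover have "(1 - v) * ?B = 1 - real (Suc k) * v + real (Suc k) * (real (Suc k) - 1) / 2 * v^2 - real (Suc k) * (real (Suc k) - 1) * (real (Suc k) - 2) / 6 * v^3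
     + real k * (real k - 1) * (real k - 2) / 6 * v^4"
    by (simp add: field_simps power2_eq_square power3_eq_cube numeral_eq_Suc)
  moreover have "0 \<le> real k * (real k - 1) * (real k - 2) / 6 * v^4" using c3_nonneg[of k] by simp
  ultimately show ?case by simp
qed

lemma BgtL:
  fixes n p v :: real
  assumes n: "n \<ge> 3" and p0: "98696/10000 \<le> p" and p1: "p \<le> 98697/10000"
    and v: "v = 2*p/(4*n^2+p)"
  shows "1 - p/(2*n) + 3*p^2/(40*n^2) < 1 - n * v + n * (n - 1) / 2 * v^2 - n * (n - 1) * (n - 2) / 6 * v^3"
proof -
  define D where "D = 4*n^2+p"
  have D: "D > 0" unfolding D_def using p0 by (simp add: add_nonneg_pos)
  define Q where "Q = 384*n^6 - 160*n^5*p + 288*n^4*p - 80*n^3*p - 108*n^2*p^2 + 60*n*p^2 - 9*p^3"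
  have Q: "Q > 0" unfolding Q_def using polyQ[OF n p0 p1] .
  have np: "n > 0" using n by simp
  have e: "((1 - n * v + n * (n - 1) / 2 * v^2 - n * (n - 1) * (n - 2) / 6 * v^3) - (1 - p/(2*n) + 3*p^2/(40*n^2))) * (120*n^2*D^3) = p^2 * Q"
    unfolding v D_def[symmetric] using D np unfolding Q_def
    by (simp add: field_simps) (simp add: D_def algebra_simps power2_eq_square power3_eq_cube numeral_eq_Suc)
  have "0 < p^2 * Q" using Q p0 by simp
  then have "0 < ((1 - n * v + n * (n - 1) / 2 * v^2 - n * (n - 1) * (n - 2) / 6 * v^3) - (1 - p/(2*n) + 3*p^2/(40*n^2))) * (120*n^2*D^3)"
    using e by simp
  moreover have "0 < 120*n^2*D^3" using D np by simp
  ultimately have "0 < ((1 - n * v + n * (n - 1) / 2 * v^2 - n * (n - 1) * (n - 2) / 6 * v^3) - (1 - p/(2*n) + 3*p^2/(40*n^2)))"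
    using zero_less_mult_pos2 by blast
  then show ?thesis by linarith
qed
lemma sin_upper5:
  fixes y :: real assumes "0 \<le> y" "y \<le> 8"
  shows "sin y \<le> y - y^3/6 + y^5/120"
proof -
  have S: "(\<Sum>m<8. sin_coeff m * y ^ m) = y - y^3/6 + y^5/120 - y^7/5040"
  proof -
    have "{..<8::nat} = {0,1,2,3,4,5,6,7}" by auto
    then show ?thesis by (simp add: sin_coeff_def fact_numeral)
  qed
  have b: "\<bar>sin y - (\<Sum>m<8. sin_coeff m * y ^ m)\<bar> \<le> inverse (fact 8) * \<bar>y\<bar> ^ 8"
    by (rule Maclaurin_sin_bound)
  have "y^8 = y * y^7" by (simp add: numeral_eq_Suc)
  also have "\<dots> \<le> 8 * y^7" using assms by (intro mult_right_mono) auto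
  finally have "y^8 \<le> 8 * y^7" .
  moreover have "sin y - (y - y^3/6 + y^5/120 - y^7/5040) \<le> y^8 / 40320"
  proof -
    have "\<bar>sin y - (y - y^3/6 + y^5/120 - y^7/5040)\<bar> \<le> y^8 / 40320"
      using b assms unfolding S by (simp add: fact_numeral)
    then show ?thesis using abs_le_D1 by blast
  qed
  ultimately show ?thesis by linarith
qed

lemma g_nonpos:
  fixes x :: real assumes "0 \<le> x" "x \<le> pi"
  shows "x * cos x - sin x \<le> 0"
proof -
  have "(\<lambda>t. t * cos t - sin t) x \<le> (\<lambda>t. t * cos t - sin t) 0"
  proof (rule DERIV_nonpos_imp_nonincreasing[OF assms(1)])
    fix t :: real assume t: "0 \<le> t" "t \<le> x"
    have "DERIV (\<lambda>t. t * cos t - sin t) t :> (1 * cos t + t * (- sin t) - cos t)"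
      by (auto intro!: derivative_eq_intros)
    moreover have "1 * cos t + t * (- sin t) - cos t \<le> 0"
      using t assms sin_ge_zero[of t] by simp
    ultimately show "\<exists>y. DERIV (\<lambda>t. t * cos t - sin t) t :> y \<and> y \<le> 0" by blast
  qed
  then show ?thesis by simp
qed

lemma sinc_mono:
  fixes x y :: real assumes "0 < y" "y \<le> x" "x \<le> pi"
  shows "sin x / x \<le> sin y / y"
proof -
  have "(\<lambda>t. sin t / t) x \<le> (\<lambda>t. sin t / t) y"
  proof (rule DERIV_nonpos_imp_nonincreasing[OF assms(2)])
    fix t :: real assume t: "y \<le> t" "t \<le> x"
    then have tp: "t > 0" using assms by simp
    have "DERIV (\<lambda>t. sin t / t) t :> (cos t * t - sin t * 1) / (t * t)"
      using tp by (auto intro!: derivative_eq_intros)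
    moreover have "(cos t * t - sin t * 1) / (t * t) \<le> 0"
      using g_nonpos[of t] t assms tp by (intro divide_nonpos_nonneg) (auto simp: mult.commute)
    ultimately show "\<exists>d. DERIV (\<lambda>t. sin t / t) t :> d \<and> d \<le> 0" by blast
  qed
  then show ?thesis by simp
qed


theorem mainTheorem8:
  fixes h :: nat
  assumes "h \<ge> 3"
  shows "sin (pi * sqrt (3 / real h)) / (pi * sqrt (3 / real h))
           < (4 / (3 - cos (pi / real h)) - 1) ^ h
         \<and> (\<forall>x::real. 0 < x \<and> x < pi \<and> sin x / x = (4 / (3 - cos (pi / real h)) - 1) ^ h
            \<longrightarrow> x < pi * sqrt (3 / real h))"
proof -
  define n where "n = real h"
  have n3: "n \<ge> 3" using assms unfolding n_def by simp
  have npos: "n > 0" using n3 by simp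
  define p where "p = pi^2"
  have pb: "98696/10000 \<le> p" "p \<le> 98697/10000"
  proof -
    have "(3.141592653588::real)^2 \<le> pi^2" using pi_approx(1) by (intro power_mono) auto
    moreover have "98696/10000 \<le> (3.141592653588::real)^2" by (simp add: power2_eq_square)
    ultimately show "98696/10000 \<le> p" unfolding p_def by linarith
    have "pi^2 \<le> (3.1415926535899::real)^2" using pi_approx(2) pi_gt_zero by (intro power_mono) auto
    moreover have "(3.1415926535899::real)^2 \<le> 98697/10000" by (simp add: power2_eq_square)
    ultimately show "p \<le> 98697/10000" unfolding p_def by linarith
  qed
  define a where "a = pi / n"
  have a0: "0 < a" unfolding a_def using npos by simp
  have api: "a \<le> pi" unfolding a_def using n3 by (simp add: divide_le_eq)
  define s where "s = sin (a/2)"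
  have s0: "0 \<le> s" unfolding s_def using a0 api by (intro sin_ge_zero) auto
  have s1: "s \<le> a/2" unfolding s_def using a0 by (intro sin_x_le_x) auto
  define u where "u = (a/2)^2"
  have su: "s^2 \<le> u" unfolding u_def using s0 s1 by (intro power_mono) auto
  have u_eq: "u = p / (4*n^2)" unfolding u_def a_def p_def by (simp add: power_divide)
  have cosa: "cos a = 1 - 2 * s^2" unfolding s_def using cos_double_sin[of "a/2"] by simp
  define r where "r = 4 / (3 - cos (pi / real h)) - 1"
  have r_eq: "r = 1 - 2 * s^2/(1+s^2)"
  proof -
    have "cos (pi / real h) = cos a" unfolding a_def n_def by simp
    then have "r = 4 / (2 + 2 * s^2) - 1" unfolding r_def cosa by simp
    also have "\<dots> = 1 - 2 * s^2/(1+s^2)"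
    proof -
      have pos: "0 < 1 + s^2" by (simp add: add_pos_nonneg)
      have "4 / (2 + 2 * s^2) = 2 / (1 + s^2)" using pos by (simp add: field_simps)
      then show ?thesis using pos by (simp add: field_simps)
    qed
    finally show ?thesis .
  qed
  define v where "v = 2*p/(4*n^2+p)"
  have v_eq: "v = 2*u/(1+u)" unfolding v_def u_eq using npos by (simp add: field_simps)
  have u0: "0 \<le> u" unfolding u_def by simp
  have v0: "0 \<le> v" unfolding v_def using pb by simp
  have v1: "v \<le> 1"
  proof -
    have "3^2 \<le> n^2" using n3 by (intro power_mono) auto
    then have "p \<le> 4*n^2" using pb by simp
    then show ?thesis unfolding v_def using pb by (simp add: divide_le_eq)
  qed
  have rge: "1 - v \<le> r"
  proof -
    have pos: "0 < 1 + s^2" by (simp add: add_pos_nonneg)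
    have pu: "0 < 1 + u" using u0 by simp
    have "s^2 * (1+u) \<le> u * (1+s^2)" using su by (simp add: algebra_simps)
    then have "2 * s^2/(1+s^2) \<le> 2*u/(1+u)" using pos pu by (simp add: divide_simps)
    then show ?thesis unfolding r_eq v_eq by simp
  qed
  have r0: "0 \<le> 1 - v" using v1 by simp
  have pw: "(1-v)^h \<le> r^h" by (rule power_mono[OF rge r0])
  have bern: "1 - n* v + n*(n-1)/2* v^2 - n*(n-1)*(n-2)/6* v^3 \<le> (1-v)^h"
    using bern3[OF v0 v1, of h] unfolding n_def .
  have BL: "1 - p/(2*n) + 3*p^2/(40*n^2) < 1 - n * v + n * (n - 1) / 2 * v^2 - n * (n - 1) * (n - 2) / 6 * v^3"
    using BgtL[OF n3 pb v_def] .
  define y where "y = pi * sqrt (3 / n)"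
  have sq1: "sqrt (3/n) \<le> 1" using n3 by simp
  have sq0: "0 < sqrt (3/n)" using npos by simp
  have y0: "0 < y" unfolding y_def using sq0 by simp
  have ypi: "y \<le> pi" unfolding y_def using sq1 pi_gt_zero
    by (metis mult.right_neutral mult_left_mono less_le)
  have y8: "y \<le> 8" using ypi pi_less_4 by linarith
  have y2: "y^2 = p*3/n" unfolding y_def p_def using npos by (simp add: power_mult_distrib)
  have "sin y / y \<le> (y - y^3/6 + y^5/120) / y"
    using sin_upper5[of y] y0 y8 by (intro divide_right_mono) auto
  also have "\<dots> = 1 - y^2/6 + (y^2)^2/120" using y0 by (simp add: field_simps power2_eq_square power3_eq_cube numeral_eq_Suc)
  also have "\<dots> = 1 - p/(2*n) + 3*p^2/(40*n^2)" unfolding y2 using npos by (simp add: field_simps power2_eq_square)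
  finally have Ly: "sin y / y \<le> 1 - p/(2*n) + 3*p^2/(40*n^2)" .
  have main: "sin y / y < r^h" using Ly BL bern pw by linarith
  have yeq: "pi * sqrt (3 / real h) = y" unfolding y_def n_def ..
  show ?thesis unfolding yeq r_def[symmetric]
  proof (intro conjI allI impI)
    show "sin y / y < r^h" by (rule main)
    fix x :: real assume x: "0 < x \<and> x < pi \<and> sin x / x = r^h"
    show "x < y"
    proof (rule ccontr)
      assume "\<not> x < y"
      then have "y \<le> x" by simp
      then have "sin x / x \<le> sin y / y" using sinc_mono[of y x] y0 x by simp
      then show False using x main by simp
    qed
  qed
qed

end
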